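(* Let $X$ be an isotropic Lévy process in $\mathbb{R}^d$, $d\ge1$, with characteristic exponent $\xi\mapsto\psi(|\xi|)$, where $\psi(|\xi|)=a|\xi|^2+\int_{\mathbb{R}^d}(1-e^{i\xi\cdot x})\nu(dx)$ with $a\ge0$ and $\nu$ a Lévy measure. Suppose $\psi$ is differentiable on $(0,\infty)$ and that $g(\lambda)=\psi(\lambda)-\frac\lambda2\psi'(\lambda)$ varies regularly at $0$ (at $\infty$, respectively) with index $2\gamma$, where $\gamma\ge0$. Assume further that $a=0$ if $g$ varies regularly at $\infty$ with index $2\gamma\in[0,2)$. Then $\psi$ varies regularly at $0$ (at $\infty$, respectively) with index $2(1\wedge\gamma)$.
   Context: $X$ is isotropic with characteristic exponent $\xi\mapsto\psi(|\xi|)$ if $\mathbb{E}[e^{i\xi\cdot X_t}]=e^{-t\psi(|\xi|)}$. A function $\ell:(0,\infty)\to(0,\infty)$ varies regularly at $\infty$ (at $0$) with index $\alpha$ if $\ell(\lambda u)/\ell(u)\to\lambda^\alpha$ as $u\to\infty$ ($u\to0$) for every $\lambda>0$. $1\wedge\gamma=\min\{1,\gamma\}$. *)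

theory Defs
  imports "HOL-Analysis.Analysis"
begin

definition regvar_at_top :: "(real \<Rightarrow> real) \<Rightarrow> real \<Rightarrow> bool" where
  "regvar_at_top l \<alpha> \<longleftrightarrow> (\<forall>u>0. l u > 0) \<and>
     (\<forall>c>0. ((\<lambda>u. l (c * u) / l u) \<longlongrightarrow> c powr \<alpha>) at_top)"

definition regvar_at_0 :: "(real \<Rightarrow> real) \<Rightarrow> real \<Rightarrow> bool" where
  "regvar_at_0 l \<alpha> \<longleftrightarrow> (\<forall>u>0. l u > 0) \<and>
     (\<forall>c>0. ((\<lambda>u. l (c * u) / l u) \<longlongrightarrow> c powr \<alpha>) (at_right 0))"

definition isotropic_levy_measure :: "(real ^ 'n) measure \<Rightarrow> bool" where
  "isotropic_levy_measure \<nu> \<longleftrightarrow>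
     sets \<nu> = sets borel \<and> emeasure \<nu> {0} = 0 \<and>
     (\<integral>\<^sup>+ x. ennreal (min 1 (norm x ^ 2)) \<partial>\<nu>) < \<infinity> \<and>
     (\<forall>T. orthogonal_transformation T \<longrightarrow> distr \<nu> borel T = \<nu>)"

end

theory Submission
  imports Defs
begin


lemma G_mono:
  fixes H f :: "real \<Rightarrow> real"
  assumes Hd: "\<And>r. r>0 \<Longrightarrow> (H has_real_derivative (-2*f r/r)) (at r)" and c: "c>0"
    and le: "\<And>t. s \<le> t \<Longrightarrow> t \<le> sb \<Longrightarrow> f(c*t) \<le> \<kappa> * f t" and s: "0<s" "s \<le> sb"
  shows "H (c * s) - \<kappa>*H s \<le> H (c * sb) - \<kappa>*H sb"
proof (rule DERIV_nonneg_imp_nondecreasing[where f="\<lambda>t. H (c*t) - \<kappa>*H t", OF s(2)])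
  fix x assume x: "s \<le> x" "x \<le> sb"
  hence x0: "x > 0" using s by linarith
  have d1: "((\<lambda>t. H (c*t)) has_real_derivative (-2*f (c*x)/(c*x)) * c) (at x)"
    using DERIV_chain2[OF Hd[of "c*x"] DERIV_cmult_Id[of c x]] c x0 by (simp add: mult.commute)
  have d: "((\<lambda>t. H (c*t) - \<kappa>*H t) has_real_derivative (-2*f (c*x)/(c*x)) * c - \<kappa> * (-2*f x/x)) (at x)"
    by (intro DERIV_diff d1 DERIV_cmult Hd x0)
  have "(-2*f (c*x)/(c*x)) * c - \<kappa> * (-2*f x/x) = 2 * (\<kappa> * f x - f (c*x)) / x"
    using c x0 by (simp add: field_simps)
  also have "\<dots> \<ge> 0" using le[OF x] x0 by simp
  finally show "\<exists>y. ((\<lambda>t. H (c*t) - \<kappa>*H t) has_real_derivative y) (at x) \<and> 0 \<le> y"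
    using d by blast
qed

lemma G_mono2:
  fixes H f :: "real \<Rightarrow> real"
  assumes Hd: "\<And>r. r>0 \<Longrightarrow> (H has_real_derivative (-2*f r/r)) (at r)" and c: "c>0"
    and le: "\<And>t. s \<le> t \<Longrightarrow> t \<le> sb \<Longrightarrow> \<kappa> * f t \<le> f(c * t)" and s: "0<s" "s \<le> sb"
  shows "H (c * sb) - \<kappa>*H sb \<le> H (c * s) - \<kappa>*H s"
proof -
  have "(\<lambda>r. - H r) (c * s) - \<kappa>*(\<lambda>r. - H r) s \<le> (\<lambda>r. - H r) (c * sb) - \<kappa>*(\<lambda>r. - H r) sb"
  proof (rule G_mono[where f="\<lambda>r. - f r", OF _ c _ s])
    fix r :: real assume "r > 0"
    from DERIV_minus[OF Hd[OF this]] show "((\<lambda>r. - H r) has_real_derivative (-2*(- f r)/r)) (at r)"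
      by simp
  next
    fix t assume "s \<le> t" "t \<le> sb"
    from le[OF this] show "- f (c * t) \<le> \<kappa> * - f t" by simp
  qed
  thus ?thesis by simp
qed

lemma key_top:
  fixes H f :: "real \<Rightarrow> real"
  assumes Hd: "\<And>r. r>0 \<Longrightarrow> (H has_real_derivative (-2*f r/r)) (at r)"
    and fpos: "\<And>r. r>0 \<Longrightarrow> f r > 0" and Hpos: "\<And>r. r>0 \<Longrightarrow> H r > 0"
    and H0: "(H \<longlongrightarrow> 0) at_top" and c: "c>0"
    and fr: "((\<lambda>u. f (c * u)/f u) \<longlongrightarrow> p) at_top"
  shows "((\<lambda>u. H (c * u)/H u) \<longlongrightarrow> p) at_top"
proof (rule tendstoI)
  fix e :: real assume e: "e>0"
  hence e2: "e/2 > 0" by simp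
  from tendstoD[OF fr e2] obtain U0 where U0: "\<And>u. u \<ge> U0 \<Longrightarrow> dist (f (c * u)/f u) p < e/2"
    by (auto simp: eventually_at_top_linorder)
  define U where "U = max U0 1"
  have U: "U > 0" "\<And>u. u \<ge> U \<Longrightarrow> \<bar>f (c * u)/f u - p\<bar> < e/2"
    using U0 by (auto simp: U_def dist_real_def)
  have Hc0: "((\<lambda>t. H (c * t)) \<longlongrightarrow> 0) at_top"
    by (rule filterlim_compose[OF H0]) (rule filterlim_tendsto_pos_mult_at_top[OF tendsto_const c filterlim_ident])
  have lim: "((\<lambda>t. H (c * t) - k * H t) \<longlongrightarrow> 0) at_top" for k
    using tendsto_diff[OF Hc0 tendsto_mult[OF tendsto_const H0, of k]] by simp
  have up: "H (c * \<mu>) \<le> (p+e/2) * H \<mu>" if \<mu>: "\<mu> \<ge> U" for \<mu>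
  proof -
    have "H (c * \<mu>) - (p+e/2) * H \<mu> \<le> 0"
    proof (rule tendsto_le[OF trivial_limit_at_top_linorder lim tendsto_const])
      show "eventually (\<lambda>t. H (c * \<mu>) - (p+e/2) * H \<mu> \<le> H (c * t) - (p+e/2) * H t) at_top"
        using eventually_ge_at_top[of \<mu>]
      proof eventually_elim
        case (elim t)
        show ?case
        proof (rule G_mono[OF Hd c _ _ elim])
          fix t' assume "\<mu> \<le> t'" "t' \<le> t"
          hence t': "t' \<ge> U" "t' > 0" using \<mu> U by auto
          from U(2)[OF t'(1)] have "f (c * t')/f t' < p+e/2" by arith
          thus "f (c * t') \<le> (p+e/2) * f t'" using fpos[OF t'(2)] by (simp add: divide_less_eq)
        next show "0 < \<mu>" using \<mu> U by auto
        qed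
      qed
    qed
    thus ?thesis by simp
  qed
  have lo: "(p-e/2) * H \<mu> \<le> H (c * \<mu>)" if \<mu>: "\<mu> \<ge> U" for \<mu>
  proof -
    have "0 \<le> H (c * \<mu>) - (p-e/2) * H \<mu>"
    proof (rule tendsto_le[OF trivial_limit_at_top_linorder tendsto_const lim])
      show "eventually (\<lambda>t. H (c * t) - (p-e/2) * H t \<le> H (c * \<mu>) - (p-e/2) * H \<mu>) at_top"
        using eventually_ge_at_top[of \<mu>]
      proof eventually_elim
        case (elim t)
        show ?case
        proof (rule G_mono2[OF Hd c _ _ elim])
          fix t' assume "\<mu> \<le> t'" "t' \<le> t"
          hence t': "t' \<ge> U" "t' > 0" using \<mu> U by auto
          from U(2)[OF t'(1)] have "f (c * t')/f t' > p-e/2" by arith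
          thus "(p-e/2) * f t' \<le> f (c * t')" using fpos[OF t'(2)] by (simp add: less_divide_eq)
        next show "0 < \<mu>" using \<mu> U by auto
        qed
      qed
    qed
    thus ?thesis by simp
  qed
  show "eventually (\<lambda>u. dist (H (c * u)/H u) p < e) at_top"
    using eventually_ge_at_top[of U]
  proof eventually_elim
    case (elim u)
    have Hu: "H u > 0" using Hpos[of u] elim U by auto
    have "H (c * u)/H u \<le> p + e/2" using up[OF elim] Hu by (simp add: divide_le_eq)
    moreover have "H (c * u)/H u \<ge> p - e/2" using lo[OF elim] Hu by (simp add: le_divide_eq)
    ultimately show ?case using e by (simp add: dist_real_def abs_le_iff)
  qed
qed

lemma key_0:
  fixes H f :: "real \<Rightarrow> real"
  assumes Hd: "\<And>r. r>0 \<Longrightarrow> (H has_real_derivative (-2*f r/r)) (at r)"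
    and fpos: "\<And>r. r>0 \<Longrightarrow> f r > 0" and Hpos: "\<And>r. r>0 \<Longrightarrow> H r > 0"
    and Hinf: "filterlim H at_top (at_right 0)" and c: "c>0"
    and fr: "((\<lambda>u. f (c * u)/f u) \<longlongrightarrow> p) (at_right 0)"
  shows "((\<lambda>u. H (c * u)/H u) \<longlongrightarrow> p) (at_right 0)"
proof (rule tendstoI)
  fix e :: real assume e: "e>0"
  hence e3: "e/3 > 0" by simp
  from tendstoD[OF fr e3] obtain U0 where U0: "U0 > 0" "\<And>u. u > 0 \<Longrightarrow> u < U0 \<Longrightarrow> dist (f (c * u)/f u) p < e/3"
    by (auto simp: eventually_at_right_field)
  define U where "U = U0/2"
  have U: "U > 0" "\<And>u. u > 0 \<Longrightarrow> u \<le> U \<Longrightarrow> \<bar>f (c * u)/f u - p\<bar> < e/3"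
    using U0 by (auto simp: U_def dist_real_def)
  define A where "A = H (c * U) - (p+e/3) * H U"
  define B where "B = H (c * U) - (p-e/3) * H U"
  have up: "H (c * \<mu>) - (p+e/3) * H \<mu> \<le> A" if \<mu>: "0 < \<mu>" "\<mu> \<le> U" for \<mu>
    unfolding A_def
  proof (rule G_mono[OF Hd c _ \<mu>])
    fix t' assume "\<mu> \<le> t'" "t' \<le> U"
    hence t': "t' \<le> U" "t' > 0" using \<mu> by auto
    from U(2)[OF t'(2) t'(1)] have "f (c * t')/f t' < p+e/3" by arith
    thus "f (c * t') \<le> (p+e/3) * f t'" using fpos[OF t'(2)] by (simp add: divide_less_eq)
  qed
  have lo: "B \<le> H (c * \<mu>) - (p-e/3) * H \<mu>" if \<mu>: "0 < \<mu>" "\<mu> \<le> U" for \<mu>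
    unfolding B_def
  proof (rule G_mono2[OF Hd c _ \<mu>])
    fix t' assume "\<mu> \<le> t'" "t' \<le> U"
    hence t': "t' \<le> U" "t' > 0" using \<mu> by auto
    from U(2)[OF t'(2) t'(1)] have "f (c * t')/f t' > p-e/3" by arith
    thus "(p-e/3) * f t' \<le> f (c * t')" using fpos[OF t'(2)] by (simp add: less_divide_eq)
  qed
  define M where "M = 3 * (\<bar>A\<bar> + \<bar>B\<bar>) / e + 1"
  have ev: "eventually (\<lambda>u. M \<le> H u) (at_right 0)" using Hinf by (simp add: filterlim_at_top)
  have ev2: "eventually (\<lambda>u. 0 < u \<and> u \<le> U) (at_right 0)"
    using eventually_at_right_real[OF U(1)] by eventually_elim auto
  show "eventually (\<lambda>u. dist (H (c * u)/H u) p < e) (at_right 0)"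
    using ev ev2
  proof eventually_elim
    case (elim u)
    have Hu: "H u > 0" using Hpos[of u] elim by auto
    have "3 * (\<bar>A\<bar> + \<bar>B\<bar>) / e < H u" using elim unfolding M_def by linarith
    hence AB: "3 * (\<bar>A\<bar> + \<bar>B\<bar>) < e * H u" using e by (simp add: divide_less_eq mult.commute)
    have "H (c * u) \<le> (p + e/3) * H u + A" using up[of u] elim by auto
    also have "\<dots> < (p + e) * H u" using AB by (simp add: algebra_simps)
    finally have 1: "H (c * u)/H u < p + e" using Hu by (simp add: divide_less_eq)
    have "(p - e) * H u < (p - e/3) * H u + B" using AB by (simp add: algebra_simps)
    also have "\<dots> \<le> H (c * u)" using lo[of u] elim by auto
    finally have 2: "H (c * u)/H u > p - e" using Hu by (simp add: less_divide_eq)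
    from 1 2 show ?case by (simp add: dist_real_def abs_less_iff)
  qed
qed

lemma ratio_f:
  fixes g :: "real \<Rightarrow> real"
  assumes F: "eventually (\<lambda>u. u > 0) F" and c: "c > 0"
    and lim: "((\<lambda>u. g (c * u) / g u) \<longlongrightarrow> c powr \<alpha>) F"
  shows "((\<lambda>u. (g (c * u) / (c * u)^2) / (g u / u^2)) \<longlongrightarrow> c powr (\<alpha> - 2)) F"
proof -
  have "((\<lambda>u. (g (c * u) / g u) / c^2) \<longlongrightarrow> c powr \<alpha> / c^2) F"
    using lim c by (intro tendsto_divide tendsto_const) auto
  moreover have "c powr \<alpha> / c^2 = c powr (\<alpha> - 2)"
    using c by (simp add: powr_diff powr_numeral)
  moreover have "eventually (\<lambda>u. (g (c * u) / g u) / c^2 = (g (c * u) / (c * u)^2) / (g u / u^2)) F"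
    using F by eventually_elim (use c in \<open>simp add: power_mult_distrib\<close>)
  ultimately show ?thesis using tendsto_cong[of "\<lambda>u. (g (c * u) / g u) / c^2" "\<lambda>u. (g (c * u) / (c * u)^2) / (g u / u^2)" F] by simp
qed

lemma ratio_psi:
  fixes \<psi> :: "real \<Rightarrow> real"
  assumes F: "eventually (\<lambda>u. u > 0) F" and c: "c > 0"
    and lim: "((\<lambda>u. (\<psi> (c * u) / (c * u)^2) / (\<psi> u / u^2)) \<longlongrightarrow> c powr \<beta>) F"
  shows "((\<lambda>u. \<psi> (c * u) / \<psi> u) \<longlongrightarrow> c powr (\<beta> + 2)) F"
proof -
  have "((\<lambda>u. c^2 * ((\<psi> (c * u) / (c * u)^2) / (\<psi> u / u^2))) \<longlongrightarrow> c^2 * c powr \<beta>) F"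
    using lim by (intro tendsto_mult tendsto_const)
  moreover have "c^2 * c powr \<beta> = c powr (\<beta> + 2)"
    using c by (simp add: powr_add powr_numeral)
  moreover have "eventually (\<lambda>u. c^2 * ((\<psi> (c * u) / (c * u)^2) / (\<psi> u / u^2)) = \<psi> (c * u) / \<psi> u) F"
    using F by eventually_elim (use c in \<open>simp add: power_mult_distrib\<close>)
  ultimately show ?thesis using tendsto_cong[of "\<lambda>u. c^2 * ((\<psi> (c * u) / (c * u)^2) / (\<psi> u / u^2))" "\<lambda>u. \<psi> (c * u) / \<psi> u" F] by simp
qed

lemma setup_h:
  fixes \<psi> :: "real \<Rightarrow> real"
  assumes diff: "\<And>r. r > 0 \<Longrightarrow> \<psi> differentiable (at r)"
    and nonneg: "\<And>r. r > 0 \<Longrightarrow> \<psi> r \<ge> 0"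
    and gpos: "\<And>r. r > 0 \<Longrightarrow> \<psi> r - r / 2 * deriv \<psi> r > 0"
  shows "\<And>r. r > 0 \<Longrightarrow> ((\<lambda>r. \<psi> r / r^2) has_real_derivative
            (-2 * ((\<psi> r - r / 2 * deriv \<psi> r) / r^2) / r)) (at r)"
    and "\<And>s t. 0 < s \<Longrightarrow> s < t \<Longrightarrow> \<psi> t / t^2 < \<psi> s / s^2"
    and "\<And>r. r > 0 \<Longrightarrow> \<psi> r / r^2 > 0"
proof -
  show hd: "((\<lambda>r. \<psi> r / r^2) has_real_derivative
            (-2 * ((\<psi> r - r / 2 * deriv \<psi> r) / r^2) / r)) (at r)" if r: "r > 0" for r
  proof -
    have d: "(\<psi> has_real_derivative deriv \<psi> r) (at r)"
      using diff[OF r] by (simp add: DERIV_deriv_iff_real_differentiable)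
    have "((\<lambda>r. \<psi> r / r^2) has_real_derivative
        (deriv \<psi> r * r^2 - \<psi> r * (2 * r)) / (r^2 * r^2)) (at r)"
      using DERIV_divide[OF d DERIV_pow[of 2 r]] r by simp
    moreover have "(deriv \<psi> r * r^2 - \<psi> r * (2 * r)) / (r^2 * r^2)
        = -2 * ((\<psi> r - r / 2 * deriv \<psi> r) / r^2) / r"
      using r by (simp add: field_simps power2_eq_square)
    ultimately show ?thesis by simp
  qed
  show dec: "\<psi> t / t^2 < \<psi> s / s^2" if st: "0 < s" "s < t" for s t
  proof (rule DERIV_neg_imp_decreasing[OF st(2)])
    fix x assume "s \<le> x" "x \<le> t"
    hence x: "x > 0" using st by linarith
    show "\<exists>y. ((\<lambda>r. \<psi> r / r^2) has_real_derivative y) (at x) \<and> y < 0"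
      using hd[OF x] gpos[OF x] x by (intro exI conjI) (auto simp: divide_neg_pos)
  qed
  show "\<psi> r / r^2 > 0" if r: "r > 0" for r
  proof -
    have "\<psi> (r+1) / (r+1)^2 \<ge> 0" using nonneg[of "r+1"] r by simp
    with dec[OF r, of "r+1"] show ?thesis by linarith
  qed
qed



lemma main_0:
  fixes \<psi> :: "real \<Rightarrow> real" and \<gamma> :: real
  assumes diff: "\<And>r. r > 0 \<Longrightarrow> \<psi> differentiable (at r)"
    and nonneg: "\<And>r. r > 0 \<Longrightarrow> \<psi> r \<ge> 0" and gamma: "\<gamma> \<ge> 0"
    and R: "regvar_at_0 (\<lambda>r. \<psi> r - r / 2 * deriv \<psi> r) (2 * \<gamma>)"
  shows "regvar_at_0 \<psi> (2 * min 1 \<gamma>)"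
proof -
  define g where "g = (\<lambda>r. \<psi> r - r / 2 * deriv \<psi> r)"
  define h where "h = (\<lambda>r. \<psi> r / r^2)"
  define f where "f = (\<lambda>r. g r / r^2)"
  have gpos: "\<And>r. r>0 \<Longrightarrow> \<psi> r - r / 2 * deriv \<psi> r > 0" using R unfolding regvar_at_0_def by auto
  note S = setup_h[OF diff nonneg gpos]
  have hd: "\<And>r. r>0 \<Longrightarrow> (h has_real_derivative (-2 * f r / r)) (at r)"
    using S(1) unfolding h_def f_def g_def by auto
  have dec: "\<And>s t. 0<s \<Longrightarrow> s<t \<Longrightarrow> h t < h s" using S(2) unfolding h_def by auto
  have hpos: "\<And>r. r>0 \<Longrightarrow> h r > 0" using S(3) unfolding h_def by auto
  have fpos: "\<And>r. r>0 \<Longrightarrow> f r > 0" using gpos unfolding f_def g_def by auto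
  have ev0: "eventually (\<lambda>u. u>0) (at_right (0::real))" by (rule eventually_at_right_less)
  have fr: "((\<lambda>u. f (c * u)/f u) \<longlongrightarrow> c powr (2*\<gamma> - 2)) (at_right 0)" if c: "c>0" for c
    using ratio_f[OF ev0 c, of g "2*\<gamma>"] R c unfolding regvar_at_0_def f_def g_def by auto
  have hcL: "((\<lambda>u. h (c * u)) \<longlongrightarrow> L) (at_right 0)" if hL: "(h \<longlongrightarrow> L) (at_right 0)" and c: "c > 0" for c L
  proof (rule filterlim_compose[OF hL])
    have "((\<lambda>u. c * u) \<longlongrightarrow> c * 0) (at_right 0)" by (intro tendsto_intros)
    moreover have "eventually (\<lambda>u. c * u > 0) (at_right (0::real))" using ev0 by eventually_elim (use c in auto)
    ultimately show "filterlim (\<lambda>u. c * u) (at_right 0) (at_right 0)"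
      by (intro tendsto_imp_filterlim_at_right) auto
  qed
  have goal: "((\<lambda>u. h (c * u)/h u) \<longlongrightarrow> c powr (2 * min 1 \<gamma> - 2)) (at_right 0)" if c: "c>0" for c
  proof (cases "bdd_above (h ` {0<..})")
    case bdd: True
    define L where "L = Sup (h ` {0<..})"
    have hle: "h t \<le> L" if "t>0" for t using bdd that unfolding L_def by (intro cSup_upper) auto
    have hlt: "h t < L" if t: "t>0" for t using dec[of "t/2" t] hle[of "t/2"] t by auto
    have hL: "(h \<longlongrightarrow> L) (at_right 0)"
    proof (rule increasing_tendsto)
      show "eventually (\<lambda>n. h n \<le> L) (at_right 0)" using ev0 by eventually_elim (rule hle)
    next
      fix x assume "x < L"
      then obtain y where y: "y>0" "x < h y" using less_cSupD[of "h`{0<..}" x] by (auto simp: L_def)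
      show "eventually (\<lambda>n. x < h n) (at_right 0)"
        using eventually_at_right_real[OF y(1)] by eventually_elim (use dec y in fastforce)
    qed
    have Lpos: "L > 0" using hpos[of 1] hle[of 1] by simp
    show ?thesis
    proof (cases "\<gamma> \<ge> 1")
      case True
      hence "2*min 1 \<gamma> - 2 = 0" by simp
      with tendsto_divide[OF hcL[OF hL c] hL] Lpos c show ?thesis by simp
    next
      case False
      define \<rho> where "\<rho> = 2*\<gamma>-2"
      have \<rho>: "\<rho> < 0" using False \<rho>_def by simp
      have p1: "2 powr \<rho> < 1" by (rule powr_less_one) (use \<rho> in auto)
      define \<kappa> where "\<kappa> = (2 powr \<rho> + 1)/2"
      have \<kappa>: "2 powr \<rho> < \<kappa>" "\<kappa> < 1" using p1 \<kappa>_def by auto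
      from order_tendstoD(2)[OF fr[of 2, folded \<rho>_def] \<kappa>(1)]
      obtain U0 where U0: "U0 > 0" "\<And>u. u > 0 \<Longrightarrow> u < U0 \<Longrightarrow> f (2 * u)/f u < \<kappa>"
        by (auto simp: eventually_at_right_field)
      define U where "U = U0/2"
      have U: "U > 0" using U0 U_def by simp
      have fU: "f (2 * t) \<le> \<kappa> * f t" if "U \<ge> t" "t > 0" for t
        using U0(2)[of t] that fpos[of t] unfolding U_def by (simp add: divide_less_eq)
      have G: "h (2 * s) - \<kappa> * h s \<le> h (2 * U) - \<kappa> * h U" if "0 < s" "s \<le> U" for s
        by (rule G_mono[OF hd _ fU]) (use that in auto)
      have lim2: "((\<lambda>s. h (2 * s) - \<kappa> * h s) \<longlongrightarrow> L - \<kappa> * L) (at_right 0)"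
        by (intro tendsto_diff tendsto_mult tendsto_const hcL[OF hL] hL) simp
      have "L - \<kappa> * L \<le> h (2 * U) - \<kappa> * h U"
      proof (rule tendsto_le[OF trivial_limit_at_right_real tendsto_const lim2])
        show "eventually (\<lambda>s. h (2 * s) - \<kappa> * h s \<le> h (2 * U) - \<kappa> * h U) (at_right 0)"
          using eventually_at_right_real[OF U] by eventually_elim (use G in auto)
      qed
      moreover have "h (2 * U) < h U" using dec[of U "2*U"] U by simp
      moreover have "h U < L" using hlt U by simp
      ultimately have "L * (1 - \<kappa>) < h U * (1 - \<kappa>)" using \<kappa> by (simp add: algebra_simps)
      hence "L < h U" using \<kappa> by simp
      with \<open>h U < L\<close> show ?thesis by simp
    qed
  next
    case unb: False
    have hinf: "filterlim h at_top (at_right 0)"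
      unfolding filterlim_at_top
    proof
      fix Z
      from unb obtain y where y: "y>0" "Z < h y" by (auto simp: bdd_above_def not_le)
      show "eventually (\<lambda>n. Z \<le> h n) (at_right 0)"
        using eventually_at_right_real[OF y(1)] by eventually_elim (use dec y in fastforce)
    qed
    have key: "((\<lambda>u. h (c * u)/h u) \<longlongrightarrow> c powr (2*\<gamma>-2)) (at_right 0)" if "c > 0" for c
      by (rule key_0[OF hd fpos hpos hinf that fr[OF that]])
    show ?thesis
    proof (cases "\<gamma> \<le> 1")
      case True then have "min 1 \<gamma> = \<gamma>" by simp
      then show ?thesis using key[OF c] by simp
    next
      case False
      have "1 \<le> (1/2) powr (2*\<gamma>-2)"
      proof (rule tendsto_le[OF trivial_limit_at_right_real key tendsto_const])
        show "eventually (\<lambda>u. 1 \<le> h ((1/2) * u)/h u) (at_right 0)"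
          using ev0 by eventually_elim (use dec[of "u/2" u for u] hpos in \<open>fastforce simp: le_divide_eq less_imp_le\<close>)
      qed simp
      moreover have "(1/2) powr (2*\<gamma>-2) < 1" using powr_less_mono2[of "2*\<gamma>-2" "1/2" 1] False by simp
      ultimately show ?thesis by simp
    qed
  qed
  show ?thesis unfolding regvar_at_0_def
  proof (intro conjI allI impI)
    fix u :: real assume u: "u>0"
    thus "\<psi> u > 0" using hpos[OF u] unfolding h_def by (simp add: zero_less_divide_iff)
  next
    fix c :: real assume c: "c>0"
    from ratio_psi[OF ev0 c, of \<psi> "2*min 1 \<gamma> - 2"] goal[OF c]
    show "((\<lambda>u. \<psi> (c * u) / \<psi> u) \<longlongrightarrow> c powr (2 * min 1 \<gamma>)) (at_right 0)"
      unfolding h_def by simp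
  qed
qed

lemma main_top:
  fixes \<psi> :: "real \<Rightarrow> real" and \<gamma> :: real
  assumes diff: "\<And>r. r > 0 \<Longrightarrow> \<psi> differentiable (at r)"
    and nonneg: "\<And>r. r > 0 \<Longrightarrow> \<psi> r \<ge> 0" and gamma: "\<gamma> \<ge> 0"
    and R: "regvar_at_top (\<lambda>r. \<psi> r - r / 2 * deriv \<psi> r) (2 * \<gamma>)"
    and Z: "\<gamma> < 1 \<Longrightarrow> ((\<lambda>r. \<psi> r / r^2) \<longlongrightarrow> 0) at_top"
  shows "regvar_at_top \<psi> (2 * min 1 \<gamma>)"
proof -
  define g where "g = (\<lambda>r. \<psi> r - r / 2 * deriv \<psi> r)"
  define h where "h = (\<lambda>r. \<psi> r / r^2)"
  define f where "f = (\<lambda>r. g r / r^2)"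
  have gpos: "\<And>r. r>0 \<Longrightarrow> \<psi> r - r / 2 * deriv \<psi> r > 0" using R unfolding regvar_at_top_def by auto
  note S = setup_h[OF diff nonneg gpos]
  have hd: "\<And>r. r>0 \<Longrightarrow> (h has_real_derivative (-2 * f r / r)) (at r)"
    using S(1) unfolding h_def f_def g_def by auto
  have dec: "\<And>s t. 0<s \<Longrightarrow> s<t \<Longrightarrow> h t < h s" using S(2) unfolding h_def by auto
  have hpos: "\<And>r. r>0 \<Longrightarrow> h r > 0" using S(3) unfolding h_def by auto
  have fpos: "\<And>r. r>0 \<Longrightarrow> f r > 0" using gpos unfolding f_def g_def by auto
  have ev0: "eventually (\<lambda>u. u>0) (at_top :: real filter)" by (rule eventually_gt_at_top)
  have fr: "((\<lambda>u. f (c * u)/f u) \<longlongrightarrow> c powr (2*\<gamma> - 2)) at_top" if c: "c>0" for c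
    using ratio_f[OF ev0 c, of g "2*\<gamma>"] R c unfolding regvar_at_top_def f_def g_def by auto
  have hmono: "h t \<le> h s" if "0 < s" "s \<le> t" for s t
    using dec[of s t] that by (cases "s = t") auto
  define L where "L = Inf (h ` {0<..})"
  have bdd: "bdd_below (h ` {0<..})" using hpos by (auto intro!: bdd_belowI[of _ 0] less_imp_le)
  have hge: "L \<le> h t" if "t>0" for t using bdd that unfolding L_def by (intro cInf_lower) auto
  have hgt: "L < h t" if t: "t>0" for t using dec[of t "t+1"] hge[of "t+1"] t by auto
  have "\<forall>x\<in>h`{0<..}. 0 \<le> x" using hpos by (simp add: less_imp_le)
  hence L0: "L \<ge> 0" unfolding L_def by (intro cInf_greatest) auto
  have hL: "(h \<longlongrightarrow> L) at_top"
  proof (rule decreasing_tendsto)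
    show "eventually (\<lambda>n. L \<le> h n) at_top" using ev0 by eventually_elim (rule hge)
  next
    fix x assume "L < x"
    then obtain y where y: "y>0" "h y < x" using cInf_lessD[of "h`{0<..}" x] by (auto simp: L_def)
    show "eventually (\<lambda>n. h n < x) at_top"
      using eventually_ge_at_top[of y]
    proof eventually_elim
      case (elim n) show ?case using hmono[OF y(1) elim] y(2) by linarith
    qed
  qed
  define H where "H = (\<lambda>t. h t - L)"
  have Hd: "(H has_real_derivative (-2 * f r / r)) (at r)" if "r>0" for r
    using DERIV_diff[OF hd[OF that] DERIV_const[of L "at r"]] unfolding H_def by simp
  have Hpos: "\<And>r. r>0 \<Longrightarrow> H r > 0" unfolding H_def using hgt by auto
  have H0: "(H \<longlongrightarrow> 0) at_top" unfolding H_def using tendsto_diff[OF hL tendsto_const[of L]] by simp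
  have key: "((\<lambda>u. H (c * u)/H u) \<longlongrightarrow> c powr (2*\<gamma>-2)) at_top" if "c > 0" for c
    by (rule key_top[OF Hd fpos Hpos H0 that fr[OF that]])
  have goal: "((\<lambda>u. h (c * u)/h u) \<longlongrightarrow> c powr (2 * min 1 \<gamma> - 2)) at_top" if c: "c>0" for c
  proof (cases "\<gamma> > 1")
    case True
    have "2 powr (2*\<gamma>-2) \<le> 1"
    proof (rule tendsto_le[OF trivial_limit_at_top_linorder tendsto_const key])
      show "eventually (\<lambda>u. H (2 * u)/H u \<le> 1) at_top"
        using ev0 by eventually_elim (use Hpos in \<open>auto simp: divide_le_eq H_def intro: hmono\<close>)
    qed simp
    moreover have "2 powr (2*\<gamma>-2) > 1" using True by simp
    ultimately show ?thesis by simp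
  next
    case False
    show ?thesis
    proof (cases "\<gamma> < 1")
      case True
      have "L = 0" using tendsto_unique[OF _ hL Z[OF True, folded h_def]] by simp
      hence "H = h" unfolding H_def by auto
      with key[OF c] True show ?thesis by simp
    next
      case False
      with \<open>\<not> \<gamma> > 1\<close> have g1: "\<gamma> = 1" by simp
      have k1: "((\<lambda>u. H (c * u)/H u - 1) \<longlongrightarrow> 0) at_top"
        using key[OF c] g1 c by (simp add: LIM_zero_iff)
      have "((\<lambda>u. h (c * u)/h u - 1) \<longlongrightarrow> 0) at_top"
      proof (rule Lim_null_comparison[OF _ tendsto_rabs_zero[OF k1]])
        show "eventually (\<lambda>u. norm (h (c * u)/h u - 1) \<le> \<bar>H (c * u)/H u - 1\<bar>) at_top"
          using ev0
        proof eventually_elim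
          case (elim u)
          have Hu: "H u > 0" using Hpos elim by auto
          have hu: "h u = H u + L" unfolding H_def by simp
          have "norm (h (c * u)/h u - 1) = \<bar>H (c * u) - H u\<bar> / (H u + L)"
            using Hu L0 unfolding hu by (simp add: H_def field_simps)
          also have "\<dots> \<le> \<bar>H (c * u) - H u\<bar> / H u"
            using Hu L0 by (intro divide_left_mono) auto
          also have "\<dots> = \<bar>H (c * u)/H u - 1\<bar>"
            using Hu by (simp add: field_simps)
          finally show ?case .
        qed
      qed
      thus ?thesis using g1 c by (simp add: LIM_zero_iff)
    qed
  qed
  show ?thesis unfolding regvar_at_top_def
  proof (intro conjI allI impI)
    fix u :: real assume u: "u>0"
    thus "\<psi> u > 0" using hpos[OF u] unfolding h_def by (simp add: zero_less_divide_iff)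
  next
    fix c :: real assume c: "c>0"
    from ratio_psi[OF ev0 c, of \<psi> "2*min 1 \<gamma> - 2"] goal[OF c]
    show "((\<lambda>u. \<psi> (c * u) / \<psi> u) \<longlongrightarrow> c powr (2 * min 1 \<gamma>)) at_top"
      unfolding h_def by simp
  qed
qed



lemma one_minus_cos_le: "1 - cos (u::real) \<le> u^2 / 2"
proof -
  have "\<bar>sin (u/2)\<bar> \<le> \<bar>u/2\<bar>" by (rule abs_sin_x_le_abs_x)
  hence "\<bar>sin (u/2)\<bar>^2 \<le> \<bar>u/2\<bar>^2" by (intro power_mono) auto
  hence "sin (u/2)^2 \<le> (u/2)^2" by (simp only: power2_abs)
  moreover have "cos u = 1 - 2 * sin (u/2)^2" using cos_double_sin[of "u/2"] by simp
  ultimately show ?thesis by (simp add: power_divide)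
qed

lemma levy_limit:
  fixes \<nu> :: "(real ^ 'n) measure" and i :: 'n
  assumes nu: "isotropic_levy_measure \<nu>"
  shows "((\<lambda>r. (\<integral>x. (1 - cos ((r *\<^sub>R axis i 1) \<bullet> x)) \<partial>\<nu>) / r^2) \<longlongrightarrow> 0) at_top"
proof -
  have sets: "sets \<nu> = sets borel" and fin: "(\<integral>\<^sup>+ x. ennreal (min 1 (norm x ^ 2)) \<partial>\<nu>) < \<infinity>"
    using nu unfolding isotropic_levy_measure_def by auto
  have bm: "borel_measurable \<nu> = borel_measurable borel" by (rule measurable_cong_sets[OF sets refl])
  have meas: "(\<lambda>x. (1 - cos (r * x $ i)) / r^2) \<in> borel_measurable \<nu>" for r
    unfolding bm by (intro borel_measurable_divide borel_measurable_const borel_measurable_continuous_onI continuous_intros)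
  have wm: "(\<lambda>x::real^'n. min 1 (norm x ^ 2)) \<in> borel_measurable \<nu>"
    unfolding bm by (intro borel_measurable_continuous_onI continuous_intros)
  have wint0: "integrable \<nu> (\<lambda>x. min 1 (norm x ^ 2))"
    by (rule integrableI_bounded[OF wm]) (use fin in simp)
  have wint: "integrable \<nu> (\<lambda>x. 2 * min 1 (norm x ^ 2))"
    using wint0 by (rule integrable_mult_right)
  have lim: "((\<lambda>r. \<integral>x. (1 - cos (r * x $ i)) / r^2 \<partial>\<nu>) \<longlongrightarrow> (\<integral>x. 0 \<partial>\<nu>)) at_top"
  proof (rule integral_dominated_convergence_at_top[where w="\<lambda>x. 2 * min 1 (norm x ^ 2)"])
    show "(\<lambda>x. 0::real) \<in> borel_measurable \<nu>" by simp
    show "\<And>r. (\<lambda>x. (1 - cos (r * x $ i)) / r^2) \<in> borel_measurable \<nu>" by (rule meas)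
    show "integrable \<nu> (\<lambda>x. 2 * min 1 (norm x ^ 2))" by (rule wint)
    show "AE x in \<nu>. ((\<lambda>r. (1 - cos (r * x $ i)) / r^2) \<longlongrightarrow> 0) at_top"
    proof (rule AE_I2)
      fix x :: "real^'n"
      show "((\<lambda>r. (1 - cos (r * x $ i)) / r^2) \<longlongrightarrow> 0) at_top"
      proof (rule Lim_null_comparison)
        show "eventually (\<lambda>r. norm ((1 - cos (r * x $ i)) / r^2) \<le> 2 / r^2) at_top"
          using eventually_gt_at_top[of 0]
        proof eventually_elim
          case (elim r)
          have "0 \<le> 1 - cos (r * x $ i)" "1 - cos (r * x $ i) \<le> 2" using cos_ge_minus_one[of "r * x $ i"] by auto
          thus ?case using elim by (simp add: divide_right_mono)
        qed
        show "((\<lambda>r::real. 2 / r^2) \<longlongrightarrow> 0) at_top" by (rule tendsto_divide_0[OF tendsto_const filterlim_at_top_imp_at_infinity[OF filterlim_pow_at_top[OF _ filterlim_ident]]]) simp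
      qed
    qed
    show "\<forall>\<^sub>F r in at_top. AE x in \<nu>. norm ((1 - cos (r * x $ i)) / r^2) \<le> 2 * min 1 (norm x ^ 2)"
      using eventually_ge_at_top[of 1]
    proof eventually_elim
      case (elim r)
      show ?case
      proof (rule AE_I2)
        fix x :: "real^'n"
        let ?u = "r * x $ i"
        have c0: "0 \<le> 1 - cos ?u" "1 - cos ?u \<le> 2" using cos_ge_minus_one[of ?u] by auto
        have r2: "r^2 \<ge> 1" using elim by simp
        have b1: "(1 - cos ?u) / r^2 \<le> 2"
        proof -
          have "(1 - cos ?u) / r^2 \<le> (1 - cos ?u) / 1" using c0 r2 by (intro divide_left_mono) auto
          hence "(1 - cos ?u) / r^2 \<le> 1 - cos ?u" by simp
          thus ?thesis using c0(2) by linarith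
        qed
        have "(1 - cos ?u) / r^2 \<le> (?u^2/2) / r^2"
          using one_minus_cos_le[of ?u] r2 by (intro divide_right_mono) auto
        also have "\<dots> = (x $ i)^2 / 2" using elim by (simp add: power_mult_distrib)
        also have "\<dots> \<le> norm x ^ 2 / 2"
          using power_mono[OF component_le_norm_cart[of x i] abs_ge_zero, of 2] by simp
        finally have b2: "(1 - cos ?u) / r^2 \<le> norm x ^ 2 / 2" .
        have "norm ((1 - cos ?u) / r^2) = (1 - cos ?u) / r^2" using c0 by simp
        also have "\<dots> \<le> 2 * min 1 (norm x ^ 2)"
        proof (cases "1 \<le> norm x ^ 2")
          case True
          hence "min 1 (norm x ^ 2) = 1" by simp
          thus ?thesis using b1 by linarith
        next
          case False
          hence "min 1 (norm x ^ 2) = norm x ^ 2" by simp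
          thus ?thesis using b2 zero_le_power2[of "norm x"] by linarith
        qed
        finally show "norm ((1 - cos ?u) / r^2) \<le> 2 * min 1 (norm x ^ 2)" .
      qed
    qed
  qed
  moreover have eq: "(r *\<^sub>R axis i 1) \<bullet> x = r * x $ i" for r and x :: "real^'n"
    by (simp add: inner_axis' inner_real_def)
  ultimately show ?thesis unfolding eq by simp
qed


theorem proposition3p7:
  fixes \<nu> :: "(real ^ 'n) measure" and a \<gamma> :: real and \<psi> :: "real \<Rightarrow> real"
  assumes nu: "isotropic_levy_measure \<nu>"
    and a: "a \<ge> 0"
    and exponent: "\<And>\<xi> :: real ^ 'n.
        \<psi> (norm \<xi>) = a * norm \<xi> ^ 2 + (\<integral>x. (1 - cos (\<xi> \<bullet> x)) \<partial>\<nu>)"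
    and diff: "\<And>r. r > 0 \<Longrightarrow> \<psi> differentiable (at r)"
    and gamma: "\<gamma> \<ge> 0"
  defines "g \<equiv> (\<lambda>r. \<psi> r - r / 2 * deriv \<psi> r)"
  shows "(regvar_at_0 g (2 * \<gamma>) \<longrightarrow> regvar_at_0 \<psi> (2 * min 1 \<gamma>)) \<and>
         (regvar_at_top g (2 * \<gamma>) \<and> (2 * \<gamma> < 2 \<longrightarrow> a = 0)
            \<longrightarrow> regvar_at_top \<psi> (2 * min 1 \<gamma>))"
proof -
  define i :: 'n where "i = undefined"
  have psi_r: "\<psi> r = a * r^2 + (\<integral>x. (1 - cos ((r *\<^sub>R axis i 1) \<bullet> x)) \<partial>\<nu>)" if "r \<ge> 0" for r
    using exponent[of "r *\<^sub>R axis i 1"] that by simp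
  have nonneg: "\<psi> r \<ge> 0" if "r > 0" for r
  proof -
    have "0 \<le> (\<integral>x. (1 - cos ((r *\<^sub>R axis i 1) \<bullet> x)) \<partial>\<nu>)"
      by (rule Bochner_Integration.integral_nonneg) (simp add: cos_le_one)
    thus ?thesis using psi_r[of r] that a by simp
  qed
  show ?thesis unfolding g_def
  proof (intro conjI impI)
    assume "regvar_at_0 (\<lambda>r. \<psi> r - r / 2 * deriv \<psi> r) (2 * \<gamma>)"
    then show "regvar_at_0 \<psi> (2 * min 1 \<gamma>)" using main_0[OF diff nonneg gamma] by fast
  next
    assume A: "regvar_at_top (\<lambda>r. \<psi> r - r / 2 * deriv \<psi> r) (2 * \<gamma>) \<and> (2 * \<gamma> < 2 \<longrightarrow> a = 0)"
    show "regvar_at_top \<psi> (2 * min 1 \<gamma>)"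
    proof (rule main_top[OF diff nonneg gamma A[THEN conjunct1]])
      assume "\<gamma> < 1"
      hence a0: "a = 0" using A by auto
      have ev: "eventually (\<lambda>r. (\<integral>x. (1 - cos ((r *\<^sub>R axis i 1) \<bullet> x)) \<partial>\<nu>) / r^2 = \<psi> r / r^2) at_top"
        using eventually_gt_at_top[of 0] by eventually_elim (simp add: psi_r a0)
      show "((\<lambda>r. \<psi> r / r^2) \<longlongrightarrow> 0) at_top"
        using tendsto_cong[OF ev] levy_limit[OF nu, of i] by simp
    qed
  qed
qed

end
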